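(* If $[w,n] \in \mathbb{W}$ and $\alpha,\beta \vDash \ell(w)$ have $\mathrm{Peak}(w) = I(\alpha)$ and $\mathrm{Val}(w) = I(\beta)$ then $\Psi_{>|\leq}([w,n]) = K_\alpha$, $\Psi_{<|\geq}([w,n]) = K_\beta$, $\Psi_{\geq|<}([w^{\tt r},n]) = K_{\alpha^{\flat}}$, and $\Psi_{\leq|>}([w^{\tt r},n]) = K_{\beta^{\flat}}$.
   Context: Let $\Bbbk$ be a field (of characteristic not two, so that peak functions make sense as a basis). For a word $w=w_1\cdots w_m$ of positive integers with $\max(w)\le n$, $[w,n]$ is the linear endomorphism of the $\Bbbk$-span of all words sending a word $v$ of length $n$ to $v_{w_1}\cdots v_{w_m}$ and others to $0$; $\mathbb{W}$ is the set of these and $\textbf{W}$ their span, a graded bialgebra (degree $\ell(w)$) with product $[v,m]\otimes[w,n]\mapsto[v\sqcup\!\sqcup(w\uparrow m),m+n]$, coproduct $\Delta_\odot([w,n])=\sum_i[w_1\cdots w_i,n]\otimes[w_{i+1}\cdots w_m,n]$ and counit $1$ on $[\emptyset,n]$, $0$ otherwise. $\zeta_\le,\zeta_\ge,\zeta_<,\zeta_>:\textbf{W}\to\Bbbk$ send $[w,n]$ to $1$ if $w$ is weakly increasing, weakly decreasing, strictly increasing, strictly decreasing respectively, and $0$ otherwise. For $\bullet,\circ$ among these symbols, $\zeta_{\bullet|\circ}=\nabla_\Bbbk\circ(\zeta_\bullet\otimes\zeta_\circ)\circ\Delta_\odot$, and $\Psi_{\bullet|\circ}(x)=\sum_\gamma(\zeta_{\bullet|\circ})_\gamma(x)M_\gamma$,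 where for $\gamma=(\gamma_1,\dots,\gamma_k)$, $(\zeta)_\gamma$ is the iterated coproduct into $\textbf{W}^{\otimes k}$, projection onto degrees $\gamma_1,\dots,\gamma_k$, $\zeta^{\otimes k}$, and multiplication; this is the unique combinatorial bialgebra morphism $(\textbf{W},\zeta_{\bullet|\circ})\to(\textsf{QSym},\zeta_{\textsf{QSym}})$. For $\alpha=(\alpha_1,\dots,\alpha_l)\vDash n$, $I(\alpha)=\{\alpha_1,\dots,\alpha_1+\cdots+\alpha_{l-1}\}$; $\alpha$ is a peak composition if $\alpha_i\ge2$ for $i<l$, and then $K_\alpha=\sum_{\beta\vDash n,\ I(\alpha)\subseteq I(\beta)\cup(I(\beta)+1)}2^{\ell(\beta)}M_\beta$ and $\alpha^\flat=(\alpha_l+1,\alpha_{l-1},\dots,\alpha_2,\alpha_1-1)$. For a word $w$, $w^{\tt r}$ is its reversal, $\mathrm{Peak}(w)=\{i:1<i<\ell(w),\ w_{i-1}\le w_i>w_{i+1}\}$, $\mathrm{Val}(w)=\{i:1<i<\ell(w),\ w_{i-1}\ge w_i<w_{i+1}\}$. *)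

theory Defs
  imports Main
begin

text \<open>Words are lists of naturals; the element [w,n] of the basis of W is the pair (w,n)
  with all letters in {1..n}. An element of QSym is represented by its coordinate
  function with respect to the monomial basis: a map from compositions (nat lists)
  to coefficients (finitely supported).\<close>

definition in_W :: "nat list \<Rightarrow> nat \<Rightarrow> bool" where
  "in_W w n \<longleftrightarrow> set w \<subseteq> {1..n}"

definition is_comp :: "nat list \<Rightarrow> nat \<Rightarrow> bool" where
  "is_comp \<alpha> m \<longleftrightarrow> (\<forall>a\<in>set \<alpha>. 0 < a) \<and> sum_list \<alpha> = m"

definition Iset :: "nat list \<Rightarrow> nat set" where
  "Iset \<alpha> = {sum_list (take j \<alpha>) | j. 1 \<le> j \<and> j < length \<alpha>}"

text \<open>Peak and valley sets, 1-indexed positions as in the paper.\<close>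
definition Peak :: "nat list \<Rightarrow> nat set" where
  "Peak w = {i. 1 < i \<and> i < length w \<and> w ! (i-2) \<le> w ! (i-1) \<and> w ! (i-1) > w ! i}"

definition Val :: "nat list \<Rightarrow> nat set" where
  "Val w = {i. 1 < i \<and> i < length w \<and> w ! (i-2) \<ge> w ! (i-1) \<and> w ! (i-1) < w ! i}"

datatype zsym = ZLe | ZGe | ZLt | ZGt

fun zrel :: "zsym \<Rightarrow> nat \<Rightarrow> nat \<Rightarrow> bool" where
  "zrel ZLe = (\<le>)" | "zrel ZGe = (\<ge>)" | "zrel ZLt = (<)" | "zrel ZGt = (>)"

definition zeta :: "zsym \<Rightarrow> nat list \<Rightarrow> nat \<Rightarrow> 'a::field" where
  "zeta s u n = (if sorted_wrt (zrel s) u then 1 else 0)"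

text \<open>zeta_{s|t} = mult o (zeta_s (x) zeta_t) o Delta, Delta deconcatenation.\<close>
definition zeta2 :: "zsym \<Rightarrow> zsym \<Rightarrow> nat list \<Rightarrow> nat \<Rightarrow> 'a::field" where
  "zeta2 s t u n = (\<Sum>i\<le>length u. zeta s (take i u) n * zeta t (drop i u) n)"

fun blocks :: "nat list \<Rightarrow> 'b list \<Rightarrow> 'b list list" where
  "blocks [] w = []"
| "blocks (g # gs) w = take g w # blocks gs (drop g w)"

text \<open>(zeta)_gamma([w,n]): iterated coproduct, projection to degrees gamma_1..gamma_k,
  zeta on each factor, multiply. For a basis element only the unique cut into
  pieces of lengths gamma_i survives the projection.\<close>
definition zeta_gamma :: "zsym \<Rightarrow> zsym \<Rightarrow> nat list \<Rightarrow> nat \<Rightarrow> nat list \<Rightarrow> 'a::field" where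
  "zeta_gamma s t w n \<gamma> =
     (if sum_list \<gamma> = length w
      then prod_list (map (\<lambda>u. zeta2 s t u n) (blocks \<gamma> w)) else 0)"

text \<open>Psi_{s|t}([w,n]) = sum over compositions gamma of (zeta_{s|t})_gamma([w,n]) M_gamma,
  given by its coefficient on M_gamma.\<close>
definition Psi :: "zsym \<Rightarrow> zsym \<Rightarrow> nat list \<Rightarrow> nat \<Rightarrow> nat list \<Rightarrow> 'a::field" where
  "Psi s t w n \<gamma> = (if (\<forall>g\<in>set \<gamma>. 0 < g) then zeta_gamma s t w n \<gamma> else 0)"

definition K :: "nat list \<Rightarrow> nat list \<Rightarrow> 'a::field" where
  "K \<alpha> \<beta> = (if is_comp \<beta> (sum_list \<alpha>) \<and> Iset \<alpha> \<subseteq> Iset \<beta> \<union> (\<lambda>i. i + 1) ` Iset \<beta>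
              then 2 ^ length \<beta> else 0)"

definition flat :: "nat list \<Rightarrow> nat list" where
  "flat \<alpha> = (if length \<alpha> \<le> 1 then \<alpha>
              else (last \<alpha> + 1) # rev (butlast (tl \<alpha>)) @ [hd \<alpha> - 1])"

end

theory Submission
  imports Defs
begin

fun badw :: "('b \<Rightarrow> 'b \<Rightarrow> bool) \<Rightarrow> ('b \<Rightarrow> 'b \<Rightarrow> bool) \<Rightarrow> 'b list \<Rightarrow> bool" where
  "badw R S (x # y # z # zs) = ((S x y \<and> R y z) \<or> badw R S (y # z # zs))"
| "badw R S _ = False"

definition cnt :: "('b \<Rightarrow> 'b \<Rightarrow> bool) \<Rightarrow> ('b \<Rightarrow> 'b \<Rightarrow> bool) \<Rightarrow> 'b list \<Rightarrow> nat" where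
  "cnt R S u = (\<Sum>i\<le>length u. (if sorted_wrt R (take i u) then 1 else 0) * (if sorted_wrt S (drop i u) then 1 else 0))"

lemma ex_nat_split: "(\<exists>j::nat. P j) \<longleftrightarrow> P 0 \<or> (\<exists>j. P (Suc j))"
  by (metis not0_implies_Suc)

lemma badw_nth: "badw R S u \<longleftrightarrow> (\<exists>j. j+2 < length u \<and> S (u!j) (u!Suc j) \<and> R (u!Suc j) (u!Suc (Suc j)))"
proof (induction R S u rule: badw.induct)
  case (1 R S x y z zs)
  show ?case
    apply (subst ex_nat_split)
    using 1 by simp
qed auto

lemma sortedS_badw:
  assumes tS: "transp S" and c: "\<And>x y. S x y \<longleftrightarrow> \<not> R x y" and "S x y"
  shows "sorted_wrt S (y # v) \<longleftrightarrow> \<not> badw R S (x # y # v)"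
  using assms(3)
proof (induction v arbitrary: x y)
  case Nil thus ?case by simp
next
  case (Cons z v)
  show ?case
  proof (cases "R y z")
    case True
    hence "\<not> S y z" using c by blast
    thus ?thesis using True Cons.prems by (simp add: sorted_wrt2[OF tS])
  next
    case False
    hence "S y z" using c by blast
    have e1: "sorted_wrt S (y#z#v) = (S y z \<and> sorted_wrt S (z#v))" by (rule sorted_wrt2[OF tS])
    have e2: "badw R S (x#y#z#v) = ((S x y \<and> R y z) \<or> badw R S (y#z#v))" by simp
    show ?thesis using Cons.IH[of y z] e1 e2 False \<open>S y z\<close> by blast
  qed
qed

lemma cnt_eq:
  assumes tR: "transp R" and tS: "transp S" and c: "\<And>x y. S x y \<longleftrightarrow> \<not> R x y"
  shows "cnt R S (x # v) = (if badw R S (x # v) then 0 else 2)"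
proof (induction v arbitrary: x)
  case Nil thus ?case by (simp add: cnt_def)
next
  case (Cons y v)
  define T where "T = (\<Sum>i\<le>length v. (if sorted_wrt R (y # take i v) then 1 else 0) * (if sorted_wrt S (drop i v) then 1 else 0) :: nat)"
  have c1: "cnt R S (y # v) = (if sorted_wrt S (y # v) then 1 else 0) + T"
    unfolding cnt_def T_def length_Cons sum.atMost_Suc_shift by (simp del: sorted_wrt.simps(2))
  have c2: "cnt R S (x # y # v) = (if sorted_wrt S (x # y # v) then 1 else 0) + (if sorted_wrt S (y # v) then 1 else 0) + (if R x y then T else 0)"
    unfolding cnt_def T_def length_Cons sum.atMost_Suc_shift by (simp add: sorted_wrt2[OF tR] sorted_wrt1 sum_distrib_left del: sorted_wrt.simps(2))
  show ?case
  proof (cases "R x y")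
    case True
    hence "\<not> S x y" using c by blast
    moreover have "badw R S (x # y # v) = badw R S (y # v)" using \<open>\<not> S x y\<close> by (cases v) auto
    ultimately show ?thesis using c1 c2 Cons[of y] True by (simp add: sorted_wrt2[OF tS] del: sorted_wrt.simps(2))
  next
    case False
    hence "S x y" using c by blast
    show ?thesis using c2 False sortedS_badw[OF tS c \<open>S x y\<close>, of v] \<open>S x y\<close> by (simp add: sorted_wrt2[OF tS] del: sorted_wrt.simps(2))
  qed
qed

lemma zeta2_cnt: "(zeta2 s t u n :: 'a::field) = of_nat (cnt (zrel s) (zrel t) u)"
  unfolding zeta2_def zeta_def cnt_def by (simp add: of_nat_sum, rule sum.cong, simp_all)

lemma Iset_Cons: "Iset (g # gs) = (if gs = [] then {} else insert g ((+) g ` Iset gs))"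
proof (cases "gs = []")
  case True thus ?thesis by (simp add: Iset_def)
next
  case False
  have "Iset (g # gs) = {g + sum_list (take k gs) | k. k < length gs}"
    unfolding Iset_def
    apply (rule set_eqI, rule iffI)
    apply clarsimp
    apply (case_tac j, simp, force)
    apply clarsimp
    apply (rule_tac x="Suc k" in exI, simp)
    done
  also have "\<dots> = insert g ((+) g ` Iset gs)"
    unfolding Iset_def
    apply (rule set_eqI, rule iffI)
    apply clarsimp
    apply (case_tac k, simp, force)
    using False apply clarsimp
    apply (erule disjE)
    apply (rule_tac x=0 in exI, simp)
    apply force
    done
  finally show ?thesis using False by simp
qed

lemma length_blocks: "length (blocks \<gamma> w) = length \<gamma>"
  by (induction \<gamma> arbitrary: w) auto

lemma blocks_nonempty: "\<forall>g\<in>set \<gamma>. 0 < g \<Longrightarrow> sum_list \<gamma> = length w \<Longrightarrow> b \<in> set (blocks \<gamma> w) \<Longrightarrow> b \<noteq> []"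
proof (induction \<gamma> arbitrary: w)
  case (Cons g gs)
  show ?case
  proof (cases "b = take g w")
    case True thus ?thesis using Cons.prems by auto
  next
    case False
    hence "b \<in> set (blocks gs (drop g w))" using Cons.prems by simp
    thus ?thesis using Cons.IH[of "drop g w"] Cons.prems by simp
  qed
qed simp

lemma prod_blocks: "(\<forall>b\<in>set bs. f b = (if P b then 0 else 2)) \<Longrightarrow>
   prod_list (map f bs) = (if \<exists>b\<in>set bs. P b then 0 else (2::'a::field) ^ length bs)"
  by (induction bs) auto

definition Wj where
  "Wj R S u j \<longleftrightarrow> j+2 < length u \<and> S (u!j) (u!Suc j) \<and> R (u!Suc j) (u!Suc (Suc j))"

lemma blocks_bad:
  assumes "\<forall>g\<in>set \<gamma>. 0 < g" "sum_list \<gamma> = length w"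
  shows "(\<exists>b\<in>set (blocks \<gamma> w). badw R S b) \<longleftrightarrow> (\<exists>j. Wj R S w j \<and> j+1 \<notin> Iset \<gamma> \<and> j+2 \<notin> Iset \<gamma>)"
  using assms
proof (induction \<gamma> arbitrary: w)
  case Nil thus ?case by (simp add: Wj_def)
next
  case (Cons g gs)
  have gl: "g \<le> length w" using Cons.prems by simp
  have IH: "(\<exists>b\<in>set (blocks gs (drop g w)). badw R S b) \<longleftrightarrow> (\<exists>j. Wj R S (drop g w) j \<and> j+1 \<notin> Iset gs \<and> j+2 \<notin> Iset gs)"
    using Cons by simp
  have first: "badw R S (take g w) \<longleftrightarrow> (\<exists>j. j + 2 < g \<and> Wj R S w j)"
    unfolding badw_nth Wj_def using gl by auto
  have dr: "Wj R S (drop g w) j \<longleftrightarrow> Wj R S w (g + j)" for j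
    unfolding Wj_def using gl by (auto simp: add.commute add.left_commute)
  have Ige: "x \<in> Iset (g # gs) \<Longrightarrow> g \<le> x" for x
    by (auto simp: Iset_Cons split: if_splits)
  show ?case
  proof
    assume "\<exists>b\<in>set (blocks (g # gs) w). badw R S b"
    hence "badw R S (take g w) \<or> (\<exists>b\<in>set (blocks gs (drop g w)). badw R S b)" by simp
    thus "\<exists>j. Wj R S w j \<and> j+1 \<notin> Iset (g#gs) \<and> j+2 \<notin> Iset (g#gs)"
    proof
      assume "badw R S (take g w)"
      then obtain j where "j+2 < g" "Wj R S w j" using first by blast
      thus ?thesis using Ige by (metis add_lessD1 less_le_not_le add_2_eq_Suc' less_imp_le Suc_eq_plus1 not_less_eq_eq numeral_2_eq_2 add_Suc_right)
    next
      assume "\<exists>b\<in>set (blocks gs (drop g w)). badw R S b"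
      then obtain j where j: "Wj R S (drop g w) j" "j+1 \<notin> Iset gs" "j+2 \<notin> Iset gs" using IH by blast
      have "g + j + 1 \<notin> Iset (g#gs)" "g + j + 2 \<notin> Iset (g#gs)" using j(2,3) by (auto simp: Iset_Cons)
      thus ?thesis using j(1) dr by (metis add.assoc)
    qed
  next
    assume "\<exists>j. Wj R S w j \<and> j+1 \<notin> Iset (g#gs) \<and> j+2 \<notin> Iset (g#gs)"
    then obtain j where j: "Wj R S w j" "j+1 \<notin> Iset (g#gs)" "j+2 \<notin> Iset (g#gs)" by blast
    show "\<exists>b\<in>set (blocks (g # gs) w). badw R S b"
    proof (cases "j + 2 < g")
      case True thus ?thesis using first j by auto
    next
      case False
      have "gs \<noteq> []"
      proof
        assume "gs = []"
        hence "g = length w" using Cons.prems by simp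
        thus False using j(1) False by (simp add: Wj_def)
      qed
      hence "j \<ge> g" using j(2,3) False by (auto simp: Iset_Cons)
      then obtain k where k: "j = g + k" by (metis le_add_diff_inverse)
      have "Wj R S (drop g w) k" using dr j(1) k by simp
      moreover have "k+1 \<notin> Iset gs" "k+2 \<notin> Iset gs" using j(2,3) k \<open>gs \<noteq> []\<close> by (auto simp: Iset_Cons)
      ultimately show ?thesis using IH by auto
    qed
  qed
qed

lemma GL:
  assumes tR: "transp (zrel s)" and tS: "transp (zrel t)" and c: "\<And>x y. zrel t x y \<longleftrightarrow> \<not> zrel s x y"
  shows "(Psi s t u n \<gamma> :: 'a::field) = (if is_comp \<gamma> (length u) \<and>
            \<not>(\<exists>j. Wj (zrel s) (zrel t) u j \<and> j+1 \<notin> Iset \<gamma> \<and> j+2 \<notin> Iset \<gamma>) then 2 ^ length \<gamma> else 0)"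
proof (cases "is_comp \<gamma> (length u)")
  case False thus ?thesis unfolding Psi_def zeta_gamma_def is_comp_def by auto
next
  case True
  hence pos: "\<forall>g\<in>set \<gamma>. 0 < g" and sm: "sum_list \<gamma> = length u" unfolding is_comp_def by auto
  have "(Psi s t u n \<gamma> :: 'a) = prod_list (map (\<lambda>b. zeta2 s t b n) (blocks \<gamma> u))"
    unfolding Psi_def zeta_gamma_def using pos sm by simp
  also have "\<dots> = (if \<exists>b\<in>set (blocks \<gamma> u). badw (zrel s) (zrel t) b then 0 else 2 ^ length (blocks \<gamma> u))"
  proof (rule prod_blocks, rule ballI)
    fix b assume "b \<in> set (blocks \<gamma> u)"
    hence "b \<noteq> []" using blocks_nonempty pos sm by blast
    then obtain x v where "b = x # v" by (cases b) auto
    thus "(zeta2 s t b n :: 'a) = (if badw (zrel s) (zrel t) b then 0 else 2)"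
      using cnt_eq[OF tR tS c, of x v] by (simp add: zeta2_cnt)
  qed
  finally show ?thesis using blocks_bad[OF pos sm] True by (auto simp: length_blocks)
qed

lemma Wj_rev: "Wj R S (rev w) j \<longleftrightarrow> j + 2 < length w \<and> Wj (\<lambda>a b. S b a) (\<lambda>a b. R b a) w (length w - 3 - j)"
proof (cases "j + 2 < length w")
  case True
  define k where "k = length w - 3 - j"
  have e: "length w - Suc j = Suc (Suc k)" "length w - Suc (Suc j) = Suc k" "length w - Suc (Suc (Suc j)) = k"
    "k + 2 < length w"
    using True unfolding k_def by auto
  have r: "rev w ! j = w ! Suc (Suc k)" "rev w ! Suc j = w ! Suc k" "rev w ! Suc (Suc j) = w ! k"
    using True e by (simp_all add: rev_nth)
  show ?thesis unfolding Wj_def k_def[symmetric] r using True e(4) by auto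
qed (simp add: Wj_def)

lemma Wj_len: "Wj R S w k \<Longrightarrow> k + 2 < length w" by (simp add: Wj_def)

lemma flip_cond:
  fixes m :: nat
  assumes r: "\<And>j. Wr j \<longleftrightarrow> j+2 < m \<and> Ww (m-3-j)" and l: "\<And>k. Ww k \<Longrightarrow> k+2 < m"
  shows "(\<forall>k. Ww k \<longrightarrow> m-1-k \<in> I \<or> m-2-k \<in> I) \<longleftrightarrow> \<not>(\<exists>j. Wr j \<and> j+1 \<notin> I \<and> j+2 \<notin> I)"
proof
  assume A: "\<forall>k. Ww k \<longrightarrow> m-1-k \<in> I \<or> m-2-k \<in> I"
  show "\<not>(\<exists>j. Wr j \<and> j+1 \<notin> I \<and> j+2 \<notin> I)"
  proof
    assume "\<exists>j. Wr j \<and> j+1 \<notin> I \<and> j+2 \<notin> I"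
    then obtain j where j: "Wr j" "j+1 \<notin> I" "j+2 \<notin> I" by blast
    hence "j+2 < m" "Ww (m-3-j)" using r by auto
    moreover have "m-1-(m-3-j) = j+2" "m-2-(m-3-j) = j+1" using \<open>j+2<m\<close> by auto
    ultimately show False using A j by metis
  qed
next
  assume B: "\<not>(\<exists>j. Wr j \<and> j+1 \<notin> I \<and> j+2 \<notin> I)"
  show "\<forall>k. Ww k \<longrightarrow> m-1-k \<in> I \<or> m-2-k \<in> I"
  proof (intro allI impI)
    fix k assume k: "Ww k"
    hence km: "k+2 < m" using l by auto
    hence "m-3-(m-3-k) = k" by auto
    hence "Wr (m-3-k)" using r k km by auto
    moreover have "m-3-k+1 = m-2-k" "m-3-k+2 = m-1-k" using km by auto
    ultimately show "m-1-k \<in> I \<or> m-2-k \<in> I" using B by metis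
  qed
qed

lemma Iset_flat:
  assumes "\<forall>a\<in>set \<alpha>. 0 < a"
  shows "Iset (flat \<alpha>) = (\<lambda>s. sum_list \<alpha> + 1 - s) ` Iset \<alpha> \<and> sum_list (flat \<alpha>) = sum_list \<alpha>"
proof (cases "length \<alpha> \<le> 1")
  case True
  hence "Iset \<alpha> = {}" unfolding Iset_def by auto
  thus ?thesis using True by (simp add: flat_def)
next
  case False
  then obtain a \<alpha>' where a': "\<alpha> = a # \<alpha>'" "\<alpha>' \<noteq> []" by (cases \<alpha>) auto
  define mid b where "mid = butlast \<alpha>'" and "b = last \<alpha>'"
  have al: "\<alpha> = a # mid @ [b]" using a' unfolding mid_def b_def by simp
  have fl: "flat \<alpha> = (b+1) # rev mid @ [a-1]" unfolding flat_def al by simp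
  have apos: "0 < a" using assms al by simp
  let ?l = "length mid + 2"
  have key: "sum_list (take j (flat \<alpha>)) = sum_list \<alpha> + 1 - sum_list (take (?l - j) \<alpha>)"
    if j: "1 \<le> j" "j < ?l" for j
  proof -
    obtain i where i: "j = Suc i" using j by (cases j) auto
    have t1: "take j (flat \<alpha>) = (b+1) # take i (rev mid)" using i j fl by simp
    have t2: "take (?l - j) \<alpha> = a # take (length mid - i) mid" using i j al by (simp add: Suc_diff_le)
    have tr: "take i (rev mid) = rev (drop (length mid - i) mid)" by (simp add: take_rev)
    have sd: "sum_list (take (length mid - i) mid) + sum_list (drop (length mid - i) mid) = sum_list mid"
      by (metis append_take_drop_id sum_list_append)
    show ?thesis using t1 t2 tr sd al by simp
  qed
  have lal: "length \<alpha> = ?l" "length (flat \<alpha>) = ?l" using al fl by auto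
  have "Iset (flat \<alpha>) = (\<lambda>s. sum_list \<alpha> + 1 - s) ` Iset \<alpha>"
  proof (rule set_eqI, rule iffI)
    fix x assume "x \<in> Iset (flat \<alpha>)"
    then obtain j where j: "x = sum_list (take j (flat \<alpha>))" "1 \<le> j" "j < ?l" unfolding Iset_def lal by auto
    have "sum_list (take (?l - j) \<alpha>) \<in> Iset \<alpha>" unfolding Iset_def lal using j by force
    thus "x \<in> (\<lambda>s. sum_list \<alpha> + 1 - s) ` Iset \<alpha>" using key[OF j(2,3)] j(1) by blast
  next
    fix x assume "x \<in> (\<lambda>s. sum_list \<alpha> + 1 - s) ` Iset \<alpha>"
    then obtain j where j: "x = sum_list \<alpha> + 1 - sum_list (take j \<alpha>)" "1 \<le> j" "j < ?l" unfolding Iset_def lal by auto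
    have j2: "1 \<le> ?l - j" "?l - j < ?l" "?l - (?l - j) = j" using j by auto
    show "x \<in> Iset (flat \<alpha>)" unfolding Iset_def lal using key[OF j2(1,2)] j2 j(1) by force
  qed
  moreover have "sum_list (flat \<alpha>) = sum_list \<alpha>" using fl al apos by simp
  ultimately show ?thesis by simp
qed

lemma Wj_PV: "Wj (zrel ZGt) (zrel ZLe) w j \<longleftrightarrow> j+2 < length w \<and> w!j \<le> w!Suc j \<and> w!Suc j > w!Suc (Suc j)"
  "Wj (zrel ZLt) (zrel ZGe) w j \<longleftrightarrow> j+2 < length w \<and> w!j \<ge> w!Suc j \<and> w!Suc j < w!Suc (Suc j)"
  unfolding Wj_def by simp_all

lemma Peak_W: "i \<in> Peak w \<longleftrightarrow> (\<exists>j. i = j+2 \<and> Wj (zrel ZGt) (zrel ZLe) w j)"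
proof
  assume A: "i \<in> Peak w"
  define j where "j = i - 2"
  have i: "i = Suc (Suc j)" using A unfolding Peak_def j_def by auto
  have "Wj (zrel ZGt) (zrel ZLe) w j" using A unfolding Wj_PV Peak_def i by simp
  thus "\<exists>j. i = j+2 \<and> Wj (zrel ZGt) (zrel ZLe) w j" using i by auto
next
  assume "\<exists>j. i = j+2 \<and> Wj (zrel ZGt) (zrel ZLe) w j"
  then obtain j where "i = j+2" "Wj (zrel ZGt) (zrel ZLe) w j" by blast
  thus "i \<in> Peak w" unfolding Wj_PV Peak_def by simp
qed

lemma Val_W: "i \<in> Val w \<longleftrightarrow> (\<exists>j. i = j+2 \<and> Wj (zrel ZLt) (zrel ZGe) w j)"
proof
  assume A: "i \<in> Val w"
  define j where "j = i - 2"
  have i: "i = Suc (Suc j)" using A unfolding Val_def j_def by auto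
  have "Wj (zrel ZLt) (zrel ZGe) w j" using A unfolding Wj_PV Val_def i by simp
  thus "\<exists>j. i = j+2 \<and> Wj (zrel ZLt) (zrel ZGe) w j" using i by auto
next
  assume "\<exists>j. i = j+2 \<and> Wj (zrel ZLt) (zrel ZGe) w j"
  then obtain j where "i = j+2" "Wj (zrel ZLt) (zrel ZGe) w j" by blast
  thus "i \<in> Val w" unfolding Wj_PV Val_def by simp
qed

lemma mem_suc_img: "(x::nat)+1 \<in> (\<lambda>i. i+1) ` I \<longleftrightarrow> x \<in> I"
  by force

lemma cond1:
  fixes P :: "nat set"
  assumes P: "\<And>i. i \<in> P \<longleftrightarrow> (\<exists>j. i = j+2 \<and> W j)"
  shows "P \<subseteq> I \<union> (\<lambda>i. i+1) ` I \<longleftrightarrow> \<not>(\<exists>j. W j \<and> j+1 \<notin> I \<and> j+2 \<notin> I)"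
proof -
  have A: "P \<subseteq> X \<longleftrightarrow> (\<forall>j. W j \<longrightarrow> j+2 \<in> X)" for X
    by (auto simp: subset_iff P)
  have B: "j+2 \<in> I \<union> (\<lambda>i. i+1) ` I \<longleftrightarrow> j+2 \<in> I \<or> j+1 \<in> I" for j
    using mem_suc_img[of "j+1" I] by (simp add: add.assoc)
  show ?thesis unfolding A B by blast
qed

lemma cond3:
  fixes m :: nat
  assumes P: "\<And>i. i \<in> P \<longleftrightarrow> (\<exists>j. i = j+2 \<and> W j)" and l: "\<And>k. W k \<Longrightarrow> k+2 < m"
  shows "(\<lambda>s. m+1-s) ` P \<subseteq> I \<union> (\<lambda>i. i+1) ` I \<longleftrightarrow> (\<forall>k. W k \<longrightarrow> m-1-k \<in> I \<or> m-2-k \<in> I)"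
proof -
  have A: "(\<lambda>s. m+1-s) ` P \<subseteq> X \<longleftrightarrow> (\<forall>k. W k \<longrightarrow> m+1-(k+2) \<in> X)" for X
    unfolding image_subset_iff
  proof (intro iffI allI impI ballI)
    fix k assume H: "\<forall>x\<in>P. m+1-x \<in> X" and "W k"
    hence "k+2 \<in> P" using P by blast
    thus "m+1-(k+2) \<in> X" using H by (rule bspec[rotated])
  next
    fix x assume H: "\<forall>k. W k \<longrightarrow> m+1-(k+2) \<in> X" and "x \<in> P"
    then obtain j where j: "x = j+2" "W j" using P by blast
    show "m+1-x \<in> X" unfolding j(1) using H[rule_format, OF j(2)] .
  qed
  have B: "m+1-(k+2) \<in> I \<union> (\<lambda>i. i+1) ` I \<longleftrightarrow> m-1-k \<in> I \<or> m-2-k \<in> I" if "W k" for k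
  proof -
    have km: "k+2 < m" using l that by auto
    have e: "m+1-(k+2) = m-1-k" "m-1-k = (m-2-k) + 1" using km by auto
    show ?thesis unfolding e(1) using mem_suc_img[of "m-2-k" I] e(2) by simp
  qed
  show ?thesis unfolding A using B by blast
qed

lemma rels:
  "(\<lambda>a b. zrel ZLt b a) = zrel ZGt" "(\<lambda>a b. zrel ZGe b a) = zrel ZLe"
  "(\<lambda>a b. zrel ZGt b a) = zrel ZLt" "(\<lambda>a b. zrel ZLe b a) = zrel ZGe"
  by (auto intro!: ext)

theorem proposition5p7:
  fixes w :: "nat list" and n :: nat and \<alpha> \<beta> :: "nat list"
  assumes char: "(2::'a::field) \<noteq> 0"
    and W: "in_W w n"
    and a: "is_comp \<alpha> (length w)" and b: "is_comp \<beta> (length w)"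
    and pk: "Peak w = Iset \<alpha>" and vl: "Val w = Iset \<beta>"
  shows "(Psi ZGt ZLe w n :: nat list \<Rightarrow> 'a) = K \<alpha>
       \<and> (Psi ZLt ZGe w n :: nat list \<Rightarrow> 'a) = K \<beta>
       \<and> (Psi ZGe ZLt (rev w) n :: nat list \<Rightarrow> 'a) = K (flat \<alpha>)
       \<and> (Psi ZLe ZGt (rev w) n :: nat list \<Rightarrow> 'a) = K (flat \<beta>)"
proof (intro conjI ext)
  have sa: "sum_list \<alpha> = length w" and pa: "\<forall>x\<in>set \<alpha>. 0 < x" using a by (auto simp: is_comp_def)
  have sb: "sum_list \<beta> = length w" and pb: "\<forall>x\<in>set \<beta>. 0 < x" using b by (auto simp: is_comp_def)
  fix \<gamma>
  have g: "(Psi ZGt ZLe w n \<gamma> :: 'a) = (if is_comp \<gamma> (length w) \<and>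
            \<not>(\<exists>j. Wj (zrel ZGt) (zrel ZLe) w j \<and> j+1 \<notin> Iset \<gamma> \<and> j+2 \<notin> Iset \<gamma>) then 2 ^ length \<gamma> else 0)"
    by (rule GL) (auto simp: transp_def)
  show "(Psi ZGt ZLe w n \<gamma> :: 'a) = K \<alpha> \<gamma>"
    unfolding g K_def sa pk[symmetric] cond1[OF Peak_W] by simp
next
  have sa: "sum_list \<alpha> = length w" and pa: "\<forall>x\<in>set \<alpha>. 0 < x" using a by (auto simp: is_comp_def)
  have sb: "sum_list \<beta> = length w" and pb: "\<forall>x\<in>set \<beta>. 0 < x" using b by (auto simp: is_comp_def)
  fix \<gamma>
  have g: "(Psi ZLt ZGe w n \<gamma> :: 'a) = (if is_comp \<gamma> (length w) \<and>
            \<not>(\<exists>j. Wj (zrel ZLt) (zrel ZGe) w j \<and> j+1 \<notin> Iset \<gamma> \<and> j+2 \<notin> Iset \<gamma>) then 2 ^ length \<gamma> else 0)"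
    by (rule GL) (auto simp: transp_def)
  show "(Psi ZLt ZGe w n \<gamma> :: 'a) = K \<beta> \<gamma>"
    unfolding g K_def sb vl[symmetric] cond1[OF Val_W] by simp
next
  have sa: "sum_list \<alpha> = length w" and pa: "\<forall>x\<in>set \<alpha>. 0 < x" using a by (auto simp: is_comp_def)
  fix \<gamma>
  have fl: "Iset (flat \<alpha>) = (\<lambda>s. length w + 1 - s) ` Peak w" "sum_list (flat \<alpha>) = length w"
    using Iset_flat[OF pa] sa pk by auto
  have c3: "Iset (flat \<alpha>) \<subseteq> Iset \<gamma> \<union> (\<lambda>i. i+1) ` Iset \<gamma> \<longleftrightarrow>
     \<not>(\<exists>j. Wj (zrel ZGe) (zrel ZLt) (rev w) j \<and> j+1 \<notin> Iset \<gamma> \<and> j+2 \<notin> Iset \<gamma>)"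
  proof -
    have c3a: "(\<lambda>s. length w + 1 - s) ` Peak w \<subseteq> Iset \<gamma> \<union> (\<lambda>i. i+1) ` Iset \<gamma> \<longleftrightarrow>
       (\<forall>k. Wj (zrel ZGt) (zrel ZLe) w k \<longrightarrow> length w-1-k \<in> Iset \<gamma> \<or> length w-2-k \<in> Iset \<gamma>)"
      by (rule cond3, rule Peak_W, simp add: Wj_def)
    show ?thesis unfolding fl(1) c3a
      by (rule flip_cond) (auto simp: Wj_rev rels dest: Wj_len)
  qed
  have g: "(Psi ZGe ZLt (rev w) n \<gamma> :: 'a) = (if is_comp \<gamma> (length (rev w)) \<and>
            \<not>(\<exists>j. Wj (zrel ZGe) (zrel ZLt) (rev w) j \<and> j+1 \<notin> Iset \<gamma> \<and> j+2 \<notin> Iset \<gamma>) then 2 ^ length \<gamma> else 0)"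
    by (rule GL) (auto simp: transp_def)
  show "(Psi ZGe ZLt (rev w) n \<gamma> :: 'a) = K (flat \<alpha>) \<gamma>"
    unfolding g length_rev K_def fl(2) c3 by simp
next
  have sb: "sum_list \<beta> = length w" and pb: "\<forall>x\<in>set \<beta>. 0 < x" using b by (auto simp: is_comp_def)
  fix \<gamma>
  have fl: "Iset (flat \<beta>) = (\<lambda>s. length w + 1 - s) ` Val w" "sum_list (flat \<beta>) = length w"
    using Iset_flat[OF pb] sb vl by auto
  have c3: "Iset (flat \<beta>) \<subseteq> Iset \<gamma> \<union> (\<lambda>i. i+1) ` Iset \<gamma> \<longleftrightarrow>
     \<not>(\<exists>j. Wj (zrel ZLe) (zrel ZGt) (rev w) j \<and> j+1 \<notin> Iset \<gamma> \<and> j+2 \<notin> Iset \<gamma>)"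
  proof -
    have c3a: "(\<lambda>s. length w + 1 - s) ` Val w \<subseteq> Iset \<gamma> \<union> (\<lambda>i. i+1) ` Iset \<gamma> \<longleftrightarrow>
       (\<forall>k. Wj (zrel ZLt) (zrel ZGe) w k \<longrightarrow> length w-1-k \<in> Iset \<gamma> \<or> length w-2-k \<in> Iset \<gamma>)"
      by (rule cond3, rule Val_W, simp add: Wj_def)
    show ?thesis unfolding fl(1) c3a
      by (rule flip_cond) (auto simp: Wj_rev rels dest: Wj_len)
  qed
  have g: "(Psi ZLe ZGt (rev w) n \<gamma> :: 'a) = (if is_comp \<gamma> (length (rev w)) \<and>
            \<not>(\<exists>j. Wj (zrel ZLe) (zrel ZGt) (rev w) j \<and> j+1 \<notin> Iset \<gamma> \<and> j+2 \<notin> Iset \<gamma>) then 2 ^ length \<gamma> else 0)"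
    by (rule GL) (auto simp: transp_def)
  show "(Psi ZLe ZGt (rev w) n \<gamma> :: 'a) = K (flat \<beta>) \<gamma>"
    unfolding g length_rev K_def fl(2) c3 by simp
qed

end
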